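(* Fix $r\ge 2$ and $\epsilon>0$. For all sufficiently large $k$, in the random coloring of $[1,M_\epsilon]$ described in the context, the probability that there exists a bad $t$-term arithmetic progression in $[1,M_\epsilon]$ with common difference greater than $b$ is at most $\frac12$.
   Context: Ascending wave: positive integers $w_1<\dots<w_n$ with $w_{i+1}-w_i\ge w_i-w_{i-1}$ for $2\le i\le n-1$; $AW(k;r)$ is the least $N$ such that every $r$-coloring of $\{1,\dots,N\}$ has a monochromatic $k$-term ascending wave. Non-integer quantities used as integers are rounded down; $\log=\log_2$. Fix $r\ge2$, $\epsilon>0$, and $k$. Let $K=\lfloor k/(10(4r-4))\rfloor$, $b=AW(K;r-1)-1$, and $M_\epsilon=\lfloor k^{2r-1-\epsilon}/(2^{r-1}(40r)^{r^2-1})\rfloor$. For each $i\in\{0,\dots,r-1\}$ fix a coloring $\gamma_i$ of $\{1,\dots,b\}$ with colors from $\{0,\dots,r-1\}\setminus\{i\}$ having no monochromatic $K$-term ascending wave. Let $A$ be the $r^2\times 2r$ matrix with rows indexed by pairs $(j,i)$, $j\in\{0,\dots,r-1\}$, $i\in\{1,\dots,r\}$, whose row $(j,i)$ has entry $(m+j)\bmod r$ in position $2m+1$ and entry $(i+m-1+j)\bmod r$ in position $2m+2$, for $m=0,\dots,r-1$. Partition $[1,M_\epsilon]$ into consecutive blocks $B_1,B_2,\dots$ of $b$ integers each (the last possibly partial), and group the blocks into consecutive groups of $2r$ blocks. For each group independently, choose a row $(s_1,\dots,s_{2r})$ of $A$ uniformly at random, give the $l$-th block of the group the label $s_l$, and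 color it by $\gamma_{s_l}$ (translated to that block). An arithmetic progression $x_1<\dots<x_t$ is good if for every $c\in\{0,\dots,r-1\}$ there is a term $x_i$ lying in a block $B_j$ such that $B_j$ and $B_{j+1}$ both have label $c$; otherwise it is bad. Here $t=\frac{(4r-2)(2r+1)}{\log(r^2/(r^2-1))}\log k+\frac{(2r+1)(\log r+1)}{\log(r^2/(r^2-1))}$. *)

theory Defs
  imports "HOL-Probability.Probability"
begin

definition asc_wave :: "(nat \<Rightarrow> nat) \<Rightarrow> nat \<Rightarrow> bool" where
  "asc_wave w n \<longleftrightarrow> (\<forall>i<n. 0 < w i) \<and> (\<forall>i. i + 1 < n \<longrightarrow> w i < w (i + 1)) \<and>
     (\<forall>i. 1 \<le> i \<and> i + 1 < n \<longrightarrow> w i - w (i - 1) \<le> w (i + 1) - w i)"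

definition AW :: "nat \<Rightarrow> nat \<Rightarrow> nat" where
  "AW k r = (LEAST N. \<forall>c :: nat \<Rightarrow> nat. (\<forall>x\<in>{1..N}. c x < r) \<longrightarrow>
      (\<exists>w col. asc_wave w k \<and> (\<forall>i<k. w i \<in> {1..N} \<and> c (w i) = col)))"

definition K_of :: "nat \<Rightarrow> nat \<Rightarrow> nat" where
  "K_of r k = k div (10 * (4 * r - 4))"

definition b_of :: "nat \<Rightarrow> nat \<Rightarrow> nat" where
  "b_of r k = AW (K_of r k) (r - 1) - 1"

definition M_of :: "nat \<Rightarrow> real \<Rightarrow> nat \<Rightarrow> nat" where
  "M_of r \<epsilon> k = nat \<lfloor>real k powr (2 * real r - 1 - \<epsilon>) /
      (2 ^ (r - 1) * (40 * real r) ^ (r\<^sup>2 - 1))\<rfloor>"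

definition t_of :: "nat \<Rightarrow> nat \<Rightarrow> nat" where
  "t_of r k = nat \<lfloor>(4 * real r - 2) * (2 * real r + 1) / log 2 (real r ^ 2 / (real r ^ 2 - 1)) * log 2 (real k)
      + (2 * real r + 1) * (log 2 (real r) + 1) / log 2 (real r ^ 2 / (real r ^ 2 - 1))\<rfloor>"

text \<open>Rows of the matrix A: pairs (j,i) with j \<in> {0..r-1}, i \<in> {1..r}.\<close>
definition rows :: "nat \<Rightarrow> (nat \<times> nat) set" where
  "rows r = {0..<r} \<times> {1..r}"

text \<open>Entry of row (j,i) at 0-based position p (= paper position p+1):
  position 2m+1 (p = 2m) has (m+j) mod r, position 2m+2 (p = 2m+1) has (i+m-1+j) mod r.\<close>
definition row_entry :: "nat \<Rightarrow> nat \<times> nat \<Rightarrow> nat \<Rightarrow> nat" where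
  "row_entry r ji p = (case ji of (j, i) \<Rightarrow>
     if even p then (p div 2 + j) mod r else (i + p div 2 - 1 + j) mod r)"

text \<open>Blocks are indexed from 0: block q is {q*b+1 .. (q+1)*b} \<inter> [1,M].\<close>
definition block_of :: "nat \<Rightarrow> nat \<Rightarrow> nat" where
  "block_of b x = (x - 1) div b"

definition nblocks :: "nat \<Rightarrow> nat \<Rightarrow> nat" where
  "nblocks b M = (M + b - 1) div b"

definition ngroups :: "nat \<Rightarrow> nat \<Rightarrow> nat \<Rightarrow> nat" where
  "ngroups r b M = (nblocks b M + 2 * r - 1) div (2 * r)"

definition label :: "nat \<Rightarrow> (nat \<Rightarrow> nat \<times> nat) \<Rightarrow> nat \<Rightarrow> nat" where
  "label r \<sigma> q = row_entry r (\<sigma> (q div (2 * r))) (q mod (2 * r))"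

definition good_AP :: "nat \<Rightarrow> nat \<Rightarrow> nat \<Rightarrow> (nat \<Rightarrow> nat \<times> nat) \<Rightarrow> nat \<Rightarrow> nat \<Rightarrow> nat \<Rightarrow> bool" where
  "good_AP r b M \<sigma> t a d \<longleftrightarrow> (\<forall>c<r. \<exists>i<t.
      block_of b (a + i * d) + 1 < nblocks b M \<and>
      label r \<sigma> (block_of b (a + i * d)) = c \<and>
      label r \<sigma> (block_of b (a + i * d) + 1) = c)"

definition row_choice :: "nat \<Rightarrow> nat \<Rightarrow> nat \<Rightarrow> (nat \<Rightarrow> nat \<times> nat) pmf" where
  "row_choice r b M = Pi_pmf {..<ngroups r b M} (0, 1) (\<lambda>_. pmf_of_set (rows r))"

definition bad_event :: "nat \<Rightarrow> nat \<Rightarrow> nat \<Rightarrow> nat \<Rightarrow> (nat \<Rightarrow> nat \<times> nat) set" where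
  "bad_event r b M t = {\<sigma>. \<exists>a d. 1 \<le> a \<and> b < d \<and> a + (t - 1) * d \<le> M \<and>
      \<not> good_AP r b M \<sigma> t a d}"

end

theory Submission
  imports Defs
begin

lemma sets_PiM_count_all:
  fixes A :: "('i \<Rightarrow> 'a::countable) set"
  assumes "finite D" "A \<subseteq> space (PiM D (\<lambda>_. count_space UNIV))"
  shows "A \<in> sets (PiM D (\<lambda>_. count_space (UNIV::'a set)))"
proof -
  have sp: "space (PiM D (\<lambda>_. count_space (UNIV::'a set))) = PiE D (\<lambda>_. UNIV)"
    by (simp add: space_PiM)
  have "countable (PiE D (\<lambda>_. (UNIV::'a set)))"
    using assms(1) by (intro countable_PiE) auto
  hence cA: "countable A" using assms(2) sp countable_subset by metis
  have single: "PiE D (\<lambda>i. {h i}) = {h}" if "h \<in> A" for h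
  proof -
    have "h \<in> PiE D (\<lambda>_. UNIV)" using that assms(2) sp by auto
    thus ?thesis
      apply (auto simp: PiE_def extensional_def fun_eq_iff)
      subgoal for x y by (cases "y \<in> D") auto
      done
  qed
  have "A = (\<Union>h\<in>A. PiE D (\<lambda>i. {h i}))"
    using single by auto
  also have "\<dots> \<in> sets (PiM D (\<lambda>_. count_space (UNIV::'a set)))"
    using cA assms(1) by (intro sets.countable_UN'') (auto intro!: sets_PiM_I_finite)
  finally show ?thesis .
qed

lemma indep_Pi_pmf:
  fixes p :: "'i \<Rightarrow> 'a::countable pmf"
  assumes fI: "finite I" and fJ: "finite J" and nJ: "J \<noteq> {}"
    and DI: "\<And>j. j \<in> J \<Longrightarrow> D j \<subseteq> I" and disj: "disjoint_family_on D J"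
    and dep: "\<And>j \<sigma> \<tau>. j \<in> J \<Longrightarrow> (\<And>i. i \<in> D j \<Longrightarrow> \<sigma> i = \<tau> i) \<Longrightarrow> \<sigma> \<in> F j \<longleftrightarrow> \<tau> \<in> F j"
  shows "measure_pmf.prob (Pi_pmf I dflt p) (\<Inter>j\<in>J. F j) =
         (\<Prod>j\<in>J. measure_pmf.prob (Pi_pmf I dflt p) (F j))"
proof -
  interpret P: prob_space "measure_pmf (Pi_pmf I dflt p)"
    by (rule measure_pmf.prob_space_axioms)
  have ind: "prob_space.indep_vars (measure_pmf (Pi_pmf I dflt p)) (\<lambda>_. count_space UNIV) (\<lambda>x f. f x) I"
    by (rule indep_vars_Pi_pmf[OF fI])
  have fD: "\<And>j. j \<in> J \<Longrightarrow> finite (D j)" using DI fI finite_subset by metis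
  have ind2: "prob_space.indep_vars (measure_pmf (Pi_pmf I dflt p)) (\<lambda>j. PiM (D j) (\<lambda>_. count_space UNIV))
      (\<lambda>j \<omega>. restrict (\<lambda>i. \<omega> i) (D j)) J"
    by (rule prob_space.indep_vars_restrict[OF measure_pmf.prob_space_axioms ind DI disj])
  define A where "A j = {h \<in> space (PiM (D j) (\<lambda>_. count_space (UNIV::'a set))).
        (\<lambda>i. if i \<in> D j then h i else dflt) \<in> F j}" for j
  have As: "A j \<in> sets (PiM (D j) (\<lambda>_. count_space UNIV))" if "j \<in> J" for j
    unfolding A_def using fD[OF that] by (intro sets_PiM_count_all) auto
  have pre: "(\<lambda>\<omega>. restrict (\<lambda>i. \<omega> i) (D j)) -` A j \<inter> space (measure_pmf (Pi_pmf I dflt p)) = F j"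
    if "j \<in> J" for j
  proof -
    have "(\<lambda>i. if i \<in> D j then restrict \<omega> (D j) i else dflt) \<in> F j \<longleftrightarrow> \<omega> \<in> F j" for \<omega>
      by (rule dep[OF that]) auto
    thus ?thesis unfolding A_def by (auto simp: space_PiM)
  qed
  have "measure_pmf.prob (Pi_pmf I dflt p) (\<Inter>j\<in>J. (\<lambda>\<omega>. restrict (\<lambda>i. \<omega> i) (D j)) -` A j \<inter> space (measure_pmf (Pi_pmf I dflt p)))
      = (\<Prod>j\<in>J. measure_pmf.prob (Pi_pmf I dflt p) ((\<lambda>\<omega>. restrict (\<lambda>i. \<omega> i) (D j)) -` A j \<inter> space (measure_pmf (Pi_pmf I dflt p))))"
    by (rule prob_space.indep_varsD_finite[OF measure_pmf.prob_space_axioms ind2 nJ fJ As])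
  thus ?thesis using pre by simp
qed

lemma pigeon_color:
  fixes c :: "nat \<Rightarrow> nat"
  assumes "s \<ge> 1" "\<And>j. j < s * K \<Longrightarrow> c j < s"
  shows "\<exists>col<s. K \<le> card {j. j < s * K \<and> c j = col}"
proof (rule ccontr)
  assume neg: "\<not> ?thesis"
  hence lt: "\<And>col. col < s \<Longrightarrow> card {j. j < s * K \<and> c j = col} \<le> K - 1" by force
  have "{..<s*K} = (\<Union>col<s. {j. j < s * K \<and> c j = col})" using assms(2) by auto
  hence "card {..<s*K} \<le> (\<Sum>col<s. card {j. j < s * K \<and> c j = col})"
    by (metis card_UN_le finite_lessThan)
  also have "\<dots> \<le> (\<Sum>col<s. K - 1)" by (intro sum_mono lt) auto
  also have "\<dots> = s * (K - 1)" by simp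
  finally have "s * K \<le> s * (K - 1)" by simp
  moreover have "K \<ge> 1"
  proof (rule ccontr)
    assume "\<not> 1 \<le> K"
    hence "K = 0" by simp
    thus False using neg assms(1) by auto
  qed
  ultimately show False using assms(1)
    by (metis diff_less less_le_trans linorder_not_le mult_less_cancel1 zero_less_one le_trans not_one_le_zero)
qed

lemma wave_exists:
  fixes c :: "nat \<Rightarrow> nat"
  assumes "s \<ge> 1" "\<forall>x\<in>{1..2^(s*K)}. c x < s"
  shows "\<exists>w col. asc_wave w K \<and> (\<forall>i<K. w i \<in> {1..2^(s*K)} \<and> c (w i) = col)"
proof -
  have "\<And>j. j < s * K \<Longrightarrow> (\<lambda>j. c (2^j)) j < s"
    using assms(2) by (auto simp: one_le_power)
  then obtain col where col: "col < s" "K \<le> card {j. j < s * K \<and> c (2^j) = col}"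
    using pigeon_color[OF assms(1), of K "\<lambda>j. c (2^j)"] by auto
  define S where "S = {j. j < s * K \<and> c (2^j) = col}"
  define xs where "xs = sorted_list_of_set S"
  have fS: "finite S" unfolding S_def by auto
  have len: "K \<le> length xs" using col fS unfolding xs_def S_def by simp
  have ss: "sorted_wrt (<) xs" unfolding xs_def by simp
  have inS: "xs ! i \<in> S" if "i < K" for i
    using that len fS unfolding xs_def by (metis less_le_trans nth_mem set_sorted_list_of_set)
  define w where "w i = (2::nat) ^ (xs ! i)" for i
  have inc: "xs ! i < xs ! (i+1)" if "i + 1 < K" for i
    using sorted_wrt_nth_less[OF ss, of i "i+1"] that len by simp
  have dbl: "2 * w i \<le> w (i+1)" if "i + 1 < K" for i
  proof -
    have "Suc (xs ! i) \<le> xs ! (i+1)" using inc[OF that] by simp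
    hence "(2::nat) ^ Suc (xs ! i) \<le> 2 ^ (xs ! (i+1))" by (rule power_increasing) simp
    thus ?thesis unfolding w_def by simp
  qed
  have wav: "asc_wave w K"
    unfolding asc_wave_def
  proof (intro conjI allI impI)
    show pos: "0 < w i" for i unfolding w_def by simp
    show "w i < w (i+1)" if "i + 1 < K" for i using dbl[OF that] pos[of i] by linarith
    show "w i - w (i - 1) \<le> w (i + 1) - w i" if "1 \<le> i \<and> i + 1 < K" for i
      using dbl[of i] that by simp
  qed
  have "w i \<in> {1..2^(s*K)} \<and> c (w i) = col" if "i < K" for i
  proof -
    have "xs ! i < s * K" "c (2 ^ (xs ! i)) = col" using inS[OF that] unfolding S_def by auto
    thus ?thesis unfolding w_def by (auto simp: one_le_power intro: power_increasing)
  qed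
  with wav show ?thesis by blast
qed

lemma AW_ge2:
  assumes "s \<ge> 1" "K \<ge> 2"
  shows "AW K s \<ge> 2"
proof -
  let ?P = "\<lambda>N. \<forall>c :: nat \<Rightarrow> nat. (\<forall>x\<in>{1..N}. c x < s) \<longrightarrow>
      (\<exists>w col. asc_wave w K \<and> (\<forall>i<K. w i \<in> {1..N} \<and> c (w i) = col))"
  have ex: "?P (2^(s*K))" using wave_exists[OF assms(1)] by blast
  have ge: "N \<ge> 2" if "?P N" for N
  proof (rule ccontr)
    assume "\<not> N \<ge> 2"
    from that[rule_format, of "\<lambda>_. 0"] assms obtain w col where
      "asc_wave w K" "\<forall>i<K. w i \<in> {1..N}" by auto
    hence "w 0 < w 1" "w 0 \<ge> 1" "w 1 \<le> N" using assms(2) unfolding asc_wave_def by auto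
    thus False using \<open>\<not> N \<ge> 2\<close> by simp
  qed
  have "?P (AW K s)" unfolding AW_def by (rule LeastI[of ?P, OF ex])
  thus ?thesis by (rule ge)
qed

lemma exists_shift:
  fixes r :: nat assumes "c < r" shows "\<exists>j<r. (x + j) mod r = c"
proof -
  have r0: "r > 0" using assms by simp
  define j where "j = (c + (r - x mod r)) mod r"
  have "(x + j) mod r = (x mod r + (c + (r - x mod r))) mod r"
    unfolding j_def by (simp add: mod_add_left_eq mod_add_right_eq)
  also have "x mod r + (c + (r - x mod r)) = c + r"
    using r0 mod_less_divisor[OF r0, of x] by linarith
  also have "(c + r) mod r = c" using assms by simp
  finally have "(x + j) mod r = c" .
  moreover have "j < r" unfolding j_def using r0 by simp
  ultimately show ?thesis by blast
qed

lemma card_rows: "card (rows r) = r * r"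
  unfolding rows_def by simp

lemma card_entry_ge:
  assumes "c < r"
  shows "r \<le> card {\<rho> \<in> rows r. row_entry r \<rho> p = c}"
proof -
  have "\<forall>i. \<exists>j<r. row_entry r (j, i) p = c"
  proof
    fix i
    show "\<exists>j<r. row_entry r (j, i) p = c"
    proof (cases "even p")
      case True thus ?thesis using exists_shift[OF assms, of "p div 2"] by (auto simp: row_entry_def)
    next
      case False thus ?thesis using exists_shift[OF assms, of "i + p div 2 - 1"]
        by (auto simp: row_entry_def)
    qed
  qed
  then obtain f where f: "\<And>i. f i < r \<and> row_entry r (f i, i) p = c" by metis
  have "(\<lambda>i. (f i, i)) ` {1..r} \<subseteq> {\<rho> \<in> rows r. row_entry r \<rho> p = c}"
    using f by (auto simp: rows_def)
  hence "card ((\<lambda>i. (f i, i)) ` {1..r}) \<le> card {\<rho> \<in> rows r. row_entry r \<rho> p = c}"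
    by (intro card_mono) (auto simp: rows_def)
  moreover have "card ((\<lambda>i. (f i, i)) ` {1..r}) = r"
    by (subst card_image) (auto simp: inj_on_def)
  ultimately show ?thesis by simp
qed

lemma rows_ne: "r \<ge> 1 \<Longrightarrow> rows r \<noteq> {}" unfolding rows_def by auto
lemma rows_fin: "finite (rows r)" unfolding rows_def by auto

lemma prob_entry_ge:
  assumes "c < r"
  shows "measure_pmf.prob (pmf_of_set (rows r)) {\<rho>. row_entry r \<rho> p = c} \<ge> 1 / r"
proof -
  have r1: "r \<ge> 1" using assms by simp
  have "measure_pmf.prob (pmf_of_set (rows r)) {\<rho>. row_entry r \<rho> p = c}
     = card (rows r \<inter> {\<rho>. row_entry r \<rho> p = c}) / card (rows r)"
    by (rule measure_pmf_of_set[OF rows_ne[OF r1] rows_fin])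
  also have "rows r \<inter> {\<rho>. row_entry r \<rho> p = c} = {\<rho> \<in> rows r. row_entry r \<rho> p = c}" by auto
  finally have eq: "measure_pmf.prob (pmf_of_set (rows r)) {\<rho>. row_entry r \<rho> p = c}
     = card {\<rho> \<in> rows r. row_entry r \<rho> p = c} / (r * r)" by (simp add: card_rows)
  have "1 / real r = real r / (r * r)" using r1 by simp
  also have "\<dots> \<le> card {\<rho> \<in> rows r. row_entry r \<rho> p = c} / (r * r)"
    using card_entry_ge[OF assms, of p] by (intro divide_right_mono) auto
  finally show ?thesis using eq by simp
qed

lemma label_dep:
  "(\<sigma> (q div (2*r)) = \<tau> (q div (2*r))) \<Longrightarrow> label r \<sigma> q = label r \<tau> q"
  unfolding label_def by simp

lemma event_prob:
  fixes r :: nat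
  assumes r2: "r \<ge> 2" and c: "c < r" and fI: "finite I"
    and gI: "q div (2*r) \<in> I" and gI': "(q+1) div (2*r) \<in> I"
  shows "measure_pmf.prob (Pi_pmf I (0,1) (\<lambda>_. pmf_of_set (rows r)))
     {\<sigma>. label r \<sigma> q = c \<and> label r \<sigma> (q+1) = c} \<ge> 1 / r^2"
proof -
  let ?P = "Pi_pmf I (0,1) (\<lambda>_. pmf_of_set (rows r))"
  define g where "g = q div (2*r)"
  define p where "p = q mod (2*r)"
  have r0: "0 < 2 * r" using r2 by simp
  have pl: "p < 2 * r" unfolding p_def using r0 by simp
  have qeq: "q = 2*r*g + p" unfolding g_def p_def by simp
  show ?thesis
  proof (cases "p = 2*r - 1")
    case False
    hence pl2: "p + 1 < 2 * r" using pl by simp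
    have e: "q + 1 = (p+1) + g * (2*r)" using qeq by simp
    have g1: "(q+1) div (2*r) = g" and p1: "(q+1) mod (2*r) = p + 1"
      using pl2 r0 unfolding e by (simp_all only: div_mult_self1 mod_mult_self1) simp_all
    have "\<exists>\<rho>\<in>rows r. row_entry r \<rho> p = c \<and> row_entry r \<rho> (p+1) = c"
    proof (cases "even p")
      case True
      then obtain m where m: "p = 2*m" by (auto elim: evenE)
      obtain j where j: "j < r" "(m + j) mod r = c" using exists_shift[OF c] by blast
      show ?thesis using j r2 m by (intro bexI[of _ "(j,1)"]) (auto simp: row_entry_def rows_def)
    next
      case False
      then obtain m where m: "p = 2*m + 1" by (auto elim: oddE)
      obtain j where j: "j < r" "(m + 1 + j) mod r = c" using exists_shift[OF c] by blast
      have "(2 + m - 1 + j) = m + 1 + j" by simp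
      thus ?thesis using j r2 m by (intro bexI[of _ "(j,2)"]) (auto simp: row_entry_def rows_def)
    qed
    then obtain \<rho> where \<rho>: "\<rho> \<in> rows r" "row_entry r \<rho> p = c" "row_entry r \<rho> (p+1) = c" by blast
    have sub: "{\<sigma>. \<sigma> g = \<rho>} \<subseteq> {\<sigma>. label r \<sigma> q = c \<and> label r \<sigma> (q+1) = c}"
      using \<rho> g1 p1 unfolding label_def g_def p_def by auto
    have "measure_pmf.prob ?P {\<sigma>. \<sigma> g = \<rho>} = measure_pmf.prob (map_pmf (\<lambda>f. f g) ?P) {\<rho>}"
      by (simp add: vimage_def)
    also have "map_pmf (\<lambda>f. f g) ?P = pmf_of_set (rows r)"
      using gI fI unfolding g_def by (subst Pi_pmf_component) auto
    also have "measure_pmf.prob (pmf_of_set (rows r)) {\<rho>} = 1 / real (r * r)"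
      using \<rho>(1) r2 by (subst measure_pmf_of_set[OF rows_ne rows_fin]) (auto simp: card_rows)
    finally have "measure_pmf.prob ?P {\<sigma>. \<sigma> g = \<rho>} = 1 / r^2" by (simp add: power2_eq_square)
    moreover have "measure_pmf.prob ?P {\<sigma>. \<sigma> g = \<rho>} \<le>
        measure_pmf.prob ?P {\<sigma>. label r \<sigma> q = c \<and> label r \<sigma> (q+1) = c}"
      by (rule measure_pmf.finite_measure_mono[OF sub]) simp
    ultimately show ?thesis by simp
  next
    case True
    have g1: "(q+1) div (2*r) = g + 1" and p1: "(q+1) mod (2*r) = 0"
    proof -
      have "q + 1 = 2*r*(g+1)" using True qeq r2 by simp
      thus "(q+1) div (2*r) = g + 1" "(q+1) mod (2*r) = 0" using r0 by simp_all
    qed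
    define A1 where "A1 = {\<rho>. row_entry r \<rho> p = c}"
    define A2 where "A2 = {\<rho>. row_entry r \<rho> 0 = c}"
    define B where "B x = (if x = g then A1 else if x = g + 1 then A2 else UNIV)" for x
    have sub: "Pi I B \<subseteq> {\<sigma>. label r \<sigma> q = c \<and> label r \<sigma> (q+1) = c}"
    proof
      fix \<sigma> assume "\<sigma> \<in> Pi I B"
      hence "\<sigma> g \<in> A1" "\<sigma> (g+1) \<in> A2" using gI gI' g1 unfolding B_def g_def
        by (auto simp: Pi_def split: if_splits)
      thus "\<sigma> \<in> {\<sigma>. label r \<sigma> q = c \<and> label r \<sigma> (q+1) = c}"
        using g1 p1 unfolding label_def A1_def A2_def g_def p_def by simp
    qed
    have gI1: "g \<in> I" "g + 1 \<in> I" using gI gI' g1 unfolding g_def by auto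
    have Ieq: "I = insert g (insert (g+1) (I - {g, g+1}))" using gI1 by auto
    have "measure_pmf.prob ?P (Pi I B) = (\<Prod>x\<in>I. measure_pmf.prob (pmf_of_set (rows r)) (B x))"
      by (rule measure_Pi_pmf_Pi[OF fI])
    also have "\<dots> = measure_pmf.prob (pmf_of_set (rows r)) A1 * measure_pmf.prob (pmf_of_set (rows r)) A2"
      using fI by (subst Ieq) (simp add: B_def)
    also have "\<dots> \<ge> (1 / r) * (1 / r)"
      unfolding A1_def A2_def using prob_entry_ge[OF c] r2
      by (intro mult_mono) auto
    finally have "measure_pmf.prob ?P (Pi I B) \<ge> 1 / r^2" by (simp add: power2_eq_square)
    moreover have "measure_pmf.prob ?P (Pi I B) \<le>
        measure_pmf.prob ?P {\<sigma>. label r \<sigma> q = c \<and> label r \<sigma> (q+1) = c}"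
      by (rule measure_pmf.finite_measure_mono[OF sub]) simp
    ultimately show ?thesis by simp
  qed
qed

lemma blk_far:
  assumes "b \<ge> 1" "x \<ge> 1" "D \<ge> m * b"
  shows "block_of b x + m \<le> block_of b (x + D)"
proof -
  have "block_of b x + m = (x - 1 + m * b) div b" unfolding block_of_def using assms(1) by simp
  also have "\<dots> \<le> (x + D - 1) div b" using assms by (intro div_le_mono) simp
  finally show ?thesis unfolding block_of_def .
qed

lemma blk_lt:
  assumes "b \<ge> 1" "y \<le> M" "y \<ge> 1"
  shows "block_of b y < nblocks b M"
proof -
  have "block_of b y \<le> (M - 1) div b" unfolding block_of_def using assms by (intro div_le_mono) simp
  also have "\<dots> < (M - 1) div b + 1" by simp
  also have "\<dots> = (M - 1 + 1 * b) div b" using assms(1) by simp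
  also have "M - 1 + 1 * b = M + b - 1" using assms by simp
  finally show ?thesis unfolding nblocks_def .
qed

lemma grp_lt:
  assumes "r \<ge> 1" "q < nblocks b M"
  shows "q div (2*r) < ngroups r b M"
proof -
  have "q div (2*r) \<le> (nblocks b M - 1) div (2*r)" using assms by (intro div_le_mono) simp
  also have "\<dots> < (nblocks b M - 1) div (2*r) + 1" by simp
  also have "\<dots> = (nblocks b M - 1 + 1 * (2*r)) div (2*r)" using assms(1) by simp
  also have "nblocks b M - 1 + 1 * (2*r) = nblocks b M + 2 * r - 1" using assms by simp
  finally show ?thesis unfolding ngroups_def .
qed

lemma ap_color_bound:
  fixes r b M t a d c :: nat
  assumes r2: "r \<ge> 2" and b1: "b \<ge> 1" and c: "c < r" and a1: "1 \<le> a" and bd: "b < d"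
    and aM: "a + (t-1)*d \<le> M"
  shows "measure_pmf.prob (row_choice r b M) {\<sigma>. \<forall>i<t. \<not>(block_of b (a+i*d) + 1 < nblocks b M \<and>
      label r \<sigma> (block_of b (a+i*d)) = c \<and> label r \<sigma> (block_of b (a+i*d)+1) = c)}
    \<le> (1 - 1/r^2)^((t-1) div (2*r+1))"
proof -
  define n where "n = (t-1) div (2*r+1)"
  define I where "I = {..<ngroups r b M}"
  let ?P = "Pi_pmf I (0,1) (\<lambda>_. pmf_of_set (rows r))"
  have P: "row_choice r b M = ?P" unfolding row_choice_def I_def ..
  let ?E = "{\<sigma>. \<forall>i<t. \<not>(block_of b (a+i*d) + 1 < nblocks b M \<and>
      label r \<sigma> (block_of b (a+i*d)) = c \<and> label r \<sigma> (block_of b (a+i*d)+1) = c)}"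
  show ?thesis
  proof (cases "n = 0")
    case True thus ?thesis unfolding n_def[symmetric] by simp
  next
    case False
    define x where "x j = a + ((2*r+1)*j)*d" for j
    define qb where "qb j = block_of b (x j)" for j
    define D where "D j = {qb j div (2*r), (qb j + 1) div (2*r)}" for j
    define F where "F j = {\<sigma>. \<not>(label r \<sigma> (qb j) = c \<and> label r \<sigma> (qb j + 1) = c)}" for j
    have x1: "x j \<ge> 1" for j unfolding x_def using a1 by simp
    have ilt: "(2*r+1)*j + 1 \<le> t - 1" if "j < n" for j
    proof -
      have "(2*r+1)*j + (2*r+1) \<le> (2*r+1)*n" using that
        by (metis add.commute mult_Suc_right mult_le_mono2 Suc_leI)
      also have "\<dots> \<le> t - 1" unfolding n_def by (metis div_times_less_eq_dividend mult.commute)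
      finally show ?thesis by simp
    qed
    have xdM: "x j + d \<le> M" if "j < n" for j
    proof -
      have "x j + d = a + ((2*r+1)*j + 1) * d" unfolding x_def by (simp add: algebra_simps)
      also have "\<dots> \<le> a + (t-1)*d" using ilt[OF that] by (intro add_left_mono mult_right_mono) auto
      finally show ?thesis using aM by linarith
    qed
    have qnb: "qb j + 1 < nblocks b M" if "j < n" for j
    proof -
      have "qb j + 1 \<le> block_of b (x j + d)" unfolding qb_def
        using blk_far[OF b1 x1, of 1 d] bd by simp
      also have "\<dots> < nblocks b M" proof -
        have "1 \<le> x j + d" using x1[of j] by linarith
        thus ?thesis by (rule blk_lt[OF b1 xdM[OF that]])
      qed
      finally show ?thesis .
    qed
    have DI: "D j \<subseteq> I" if "j \<in> {..<n}" for j
      using grp_lt[of r "qb j" b M] grp_lt[of r "qb j + 1" b M] qnb[of j] that r2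
      unfolding D_def I_def by auto
    have far: "qb j + (2*r+1) \<le> qb j'" if jj: "j < j'" for j j'
    proof -
      obtain m where m0: "0 < m" "j + m = j'" using less_imp_add_positive[OF jj] by blast
      have m: "j' = j + m" "m \<ge> 1" using m0 by auto
      have "x j' = x j + (2*r+1)*m*d" unfolding x_def m(1) by (simp add: algebra_simps)
      moreover have "(2*r+1)*m*d \<ge> (2*r+1)*b"
      proof -
        have "(2*r+1)*b*1 \<le> (2*r+1)*b*m" using m(2) by (intro mult_le_mono2)
        hence "(2*r+1)*b \<le> (2*r+1)*m*b" by (metis mult.commute mult.assoc mult_1_right)
        also have "\<dots> \<le> (2*r+1)*m*d" using bd by simp
        finally show ?thesis .
      qed
      ultimately show ?thesis unfolding qb_def using blk_far[OF b1 x1[of j], where D="(2*r+1)*m*d" and m="2*r+1"]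
        by simp
    qed
    have dj: "D j \<inter> D j' = {}" if "j < j'" for j j'
    proof -
      have "(qb j + 1) div (2*r) + 1 = (qb j + 1 + 1 * (2*r)) div (2*r)" using r2
        by (subst div_mult_self1) auto
      also have "\<dots> \<le> qb j' div (2*r)" using far[OF that] by (intro div_le_mono) simp
      finally have h: "(qb j + 1) div (2*r) < qb j' div (2*r)" by simp
      have l1: "qb j div (2*r) \<le> (qb j + 1) div (2*r)" by (intro div_le_mono) simp
      have l2: "qb j' div (2*r) \<le> (qb j' + 1) div (2*r)" by (intro div_le_mono) simp
      have A: "y < qb j' div (2*r)" if "y \<in> D j" for y
        using that l1 h unfolding D_def by (elim insertE) (linarith, linarith, simp)
      have B: "qb j' div (2*r) \<le> y" if "y \<in> D j'" for y
        using that l2 unfolding D_def by (elim insertE) (linarith, linarith, simp)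
      show ?thesis using A B by (meson disjoint_iff leD)
    qed
    have disj: "disjoint_family_on D {..<n}"
      unfolding disjoint_family_on_def
    proof (intro ballI impI)
      fix j j' assume "j \<in> {..<n}" "j' \<in> {..<n}" "j \<noteq> j'"
      thus "D j \<inter> D j' = {}" using dj[of j j'] dj[of j' j] by (cases "j < j'") auto
    qed
    have dep: "\<sigma> \<in> F j \<longleftrightarrow> \<tau> \<in> F j" if "j \<in> {..<n}" "\<And>i. i \<in> D j \<Longrightarrow> \<sigma> i = \<tau> i" for j \<sigma> \<tau>
    proof -
      have "label r \<sigma> (qb j) = label r \<tau> (qb j)" "label r \<sigma> (qb j + 1) = label r \<tau> (qb j + 1)"
        using that(2) unfolding D_def by (auto intro!: label_dep)
      thus ?thesis unfolding F_def by simp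
    qed
    have sub: "?E \<subseteq> (\<Inter>j\<in>{..<n}. F j)"
    proof
      fix \<sigma> assume s: "\<sigma> \<in> ?E"
      show "\<sigma> \<in> (\<Inter>j\<in>{..<n}. F j)"
      proof
        fix j assume j: "j \<in> {..<n}"
        have "(2*r+1)*j < t" using ilt[of j] j by auto
        with s have "\<not>(block_of b (x j) + 1 < nblocks b M \<and>
          label r \<sigma> (block_of b (x j)) = c \<and> label r \<sigma> (block_of b (x j)+1) = c)"
          unfolding x_def by auto
        thus "\<sigma> \<in> F j" using qnb[of j] j unfolding F_def qb_def by auto
      qed
    qed
    have fI: "finite I" unfolding I_def by simp
    have "measure_pmf.prob ?P ?E \<le> measure_pmf.prob ?P (\<Inter>j\<in>{..<n}. F j)"
      by (rule measure_pmf.finite_measure_mono[OF sub]) simp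
    also have "\<dots> = (\<Prod>j\<in>{..<n}. measure_pmf.prob ?P (F j))"
      by (rule indep_Pi_pmf[OF fI _ _ DI disj dep]) (use False in auto)
    also have "\<dots> \<le> (\<Prod>j\<in>{..<n}. (1 - 1/r^2))"
    proof (intro prod_mono conjI)
      fix j assume j: "j \<in> {..<n}"
      show "0 \<le> measure_pmf.prob ?P (F j)" by simp
      have "F j = space (measure_pmf ?P) - {\<sigma>. label r \<sigma> (qb j) = c \<and> label r \<sigma> (qb j + 1) = c}"
        unfolding F_def by auto
      hence "measure_pmf.prob ?P (F j) = 1 - measure_pmf.prob ?P {\<sigma>. label r \<sigma> (qb j) = c \<and> label r \<sigma> (qb j + 1) = c}"
        using measure_pmf.prob_compl by simp
      moreover have "measure_pmf.prob ?P {\<sigma>. label r \<sigma> (qb j) = c \<and> label r \<sigma> (qb j + 1) = c} \<ge> 1/r^2"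
        using DI[OF j] by (intro event_prob[OF r2 c fI]) (auto simp: D_def)
      ultimately show "measure_pmf.prob ?P (F j) \<le> 1 - 1/r^2" by simp
    qed
    also have "\<dots> = (1 - 1/r^2)^n" by simp
    finally show ?thesis unfolding P n_def .
  qed
qed

lemma prob_bound:
  fixes r b M t :: nat
  assumes r2: "r \<ge> 2" and b1: "b \<ge> 1" and t2: "t \<ge> 2"
  shows "measure_pmf.prob (row_choice r b M) (bad_event r b M t)
     \<le> real M * real M * real r * (1 - 1/(real r)^2)^((t-1) div (2*r+1))"
proof -
  let ?P = "row_choice r b M"
  let ?q = "(1 - 1/(real r)^2)^((t-1) div (2*r+1))"
  define G where "G a d c = {\<sigma>. 1 \<le> a \<and> b < d \<and> a + (t-1)*d \<le> M \<and>
     (\<forall>i<t. \<not>(block_of b (a+i*d) + 1 < nblocks b M \<and>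
      label r \<sigma> (block_of b (a+i*d)) = c \<and> label r \<sigma> (block_of b (a+i*d)+1) = c))}" for a d c
  define S where "S = {1..M} \<times> {1..M}"
  define H where "H p = (\<Union>c\<in>{..<r}. G (fst p) (snd p) c)" for p
  have Gb: "measure_pmf.prob ?P (G a d c) \<le> ?q" if "c < r" for a d c
  proof (cases "1 \<le> a \<and> b < d \<and> a + (t-1)*d \<le> M")
    case True
    hence "G a d c = {\<sigma>. \<forall>i<t. \<not>(block_of b (a+i*d) + 1 < nblocks b M \<and>
      label r \<sigma> (block_of b (a+i*d)) = c \<and> label r \<sigma> (block_of b (a+i*d)+1) = c)}"
      unfolding G_def by auto
    thus ?thesis using ap_color_bound[OF r2 b1 that] True by simp
  next
    case False
    hence "G a d c = {}" unfolding G_def by auto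
    moreover have "1/(real r)^2 \<le> 1" using r2 by (simp add: field_simps)
    ultimately show ?thesis by simp
  qed
  have Hb: "measure_pmf.prob ?P (H p) \<le> real r * ?q" for p
  proof -
    have "measure_pmf.prob ?P (H p) \<le> (\<Sum>c\<in>{..<r}. measure_pmf.prob ?P (G (fst p) (snd p) c))"
      unfolding H_def by (rule measure_pmf.finite_measure_subadditive_finite) auto
    also have "\<dots> \<le> (\<Sum>c\<in>{..<r}. ?q)" by (intro sum_mono Gb) auto
    finally show ?thesis by simp
  qed
  have sub: "bad_event r b M t \<subseteq> (\<Union>p\<in>S. H p)"
  proof
    fix \<sigma> assume "\<sigma> \<in> bad_event r b M t"
    then obtain a d where ad: "1 \<le> a" "b < d" "a + (t - 1) * d \<le> M" "\<not> good_AP r b M \<sigma> t a d"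
      unfolding bad_event_def by auto
    from ad(4) obtain c where c: "c < r" "\<forall>i<t. \<not>(block_of b (a + i * d) + 1 < nblocks b M \<and>
      label r \<sigma> (block_of b (a + i * d)) = c \<and> label r \<sigma> (block_of b (a + i * d) + 1) = c)"
      unfolding good_AP_def by auto
    have "1 \<le> t - 1" using t2 by simp
    hence "1 * d \<le> (t-1)*d" by (rule mult_le_mono1)
    hence "d \<le> (t-1)*d" by simp
    hence "a \<le> M" "d \<le> M" "1 \<le> d" using ad b1 by linarith+
    hence "(a, d) \<in> S" using ad unfolding S_def by auto
    moreover have "\<sigma> \<in> H (a, d)" using c ad unfolding H_def G_def by auto
    ultimately show "\<sigma> \<in> (\<Union>p\<in>S. H p)" by blast
  qed
  have "measure_pmf.prob ?P (bad_event r b M t) \<le> measure_pmf.prob ?P (\<Union>p\<in>S. H p)"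
    by (rule measure_pmf.finite_measure_mono[OF sub]) simp
  also have "\<dots> \<le> (\<Sum>p\<in>S. measure_pmf.prob ?P (H p))"
    unfolding S_def by (rule measure_pmf.finite_measure_subadditive_finite) auto
  also have "\<dots> \<le> (\<Sum>p\<in>S. real r * ?q)" by (intro sum_mono Hb)
  also have "\<dots> = real M * real M * real r * ?q" unfolding S_def by simp
  finally show ?thesis .
qed

lemma final_ineq:
  fixes r \<epsilon> L lam Mr :: real and n :: nat
  assumes r1: "r \<ge> 1" and e: "\<epsilon> > 0" and L: "L > 0" and lam: "lam \<ge> L/\<epsilon>"
   and M0: "0 \<le> Mr" and Mb: "Mr \<le> 2 powr ((2*r-1-\<epsilon>)*lam)"
   and nb: "real n \<ge> ((4*r-2)*lam + log 2 r + 1)/L - 2"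
  shows "Mr*Mr*r*(2 powr (-L))^n \<le> 1/2"
proof -
  have q: "(2 powr (-L))^n = 2 powr (-L * real n)"
    by (simp add: powr_realpow[symmetric] powr_powr)
  have rr: "r = 2 powr (log 2 r)" using r1 by simp
  have MM: "Mr*Mr \<le> 2 powr ((2*r-1-\<epsilon>)*lam) * 2 powr ((2*r-1-\<epsilon>)*lam)"
    using M0 Mb by (intro mult_mono) auto
  have "Mr*Mr*r*(2 powr (-L))^n \<le> (2 powr ((2*r-1-\<epsilon>)*lam) * 2 powr ((2*r-1-\<epsilon>)*lam)) * r * (2 powr (-L))^n"
    using MM r1 by (intro mult_right_mono) auto
  also have "\<dots> = 2 powr ((2*r-1-\<epsilon>)*lam + (2*r-1-\<epsilon>)*lam + log 2 r + (- L * real n))"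
    unfolding q powr_add using r1 by simp
  also have "\<dots> = 2 powr (2*(2*r-1-\<epsilon>)*lam + log 2 r - L * real n)"
    by (simp add: algebra_simps)
  also have "\<dots> \<le> 2 powr (-1)"
  proof (intro powr_mono)
    have el: "\<epsilon> * lam \<ge> L" using lam e by (simp add: field_simps)
    have "L * real n \<ge> L * (((4*r-2)*lam + log 2 r + 1)/L - 2)"
      using nb L by (intro mult_left_mono) auto
    also have "L * (((4*r-2)*lam + log 2 r + 1)/L - 2) = (4*r-2)*lam + log 2 r + 1 - 2*L"
      using L by (simp add: field_simps)
    finally have "L * real n \<ge> (4*r-2)*lam + log 2 r + 1 - 2*L" .
    thus "2*(2*r-1-\<epsilon>)*lam + log 2 r - L * real n \<le> -1" using el by (simp add: algebra_simps)
  qed simp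
  also have "(2::real) powr (-1) = 1/2" by (simp add: powr_minus)
  finally show ?thesis .
qed

lemma real_div_ge:
  fixes a b :: nat assumes "b > 0"
  shows "real (a div b) \<ge> real a / real b - 1"
proof -
  have e: "real a = real b * real (a div b) + real (a mod b)"
    by (simp flip: of_nat_mult of_nat_add)
  have m: "real (a mod b) < real b" using assms by simp
  have "real a < real b * (real (a div b) + 1)" using e m by (simp add: algebra_simps)
  thus ?thesis using assms by (simp add: field_simps)
qed

theorem lemma2p2:
  fixes r :: nat and \<epsilon> :: real
  assumes "r \<ge> 2" and "\<epsilon> > 0"
  shows "\<forall>\<^sub>F k in sequentially.
    measure_pmf.prob (row_choice r (b_of r k) (M_of r \<epsilon> k))
      (bad_event r (b_of r k) (M_of r \<epsilon> k) (t_of r k)) \<le> 1 / 2"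
proof -
  note r2 = assms(1) and e = assms(2)
  define L where "L = log 2 (real r ^ 2 / (real r ^ 2 - 1))"
  have rr: "real r \<ge> 2" using r2 by simp
  have "(2::real) ^ 2 \<le> real r ^ 2" using rr by (intro power_mono) auto
  hence sq: "real r ^ 2 \<ge> 4" by simp
  have den: "real r ^ 2 - 1 > 0" using sq by simp
  have ratio1: "real r ^ 2 / (real r ^ 2 - 1) > 1" using den by (simp add: field_simps)
  have ratio2: "real r ^ 2 / (real r ^ 2 - 1) \<le> 2" using den sq by (simp add: field_simps)
  have L0: "L > 0" unfolding L_def using ratio1 by simp
  have L1: "L \<le> 1" unfolding L_def using ratio1 ratio2 by simp
  have qL: "1 - 1 / (real r)^2 = 2 powr (-L)"
  proof -
    have "2 powr (-L) = 1 / (real r ^ 2 / (real r ^ 2 - 1))"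
      unfolding powr_minus_divide L_def using ratio1 by simp
    also have "\<dots> = (real r ^ 2 - 1) / real r ^ 2" by simp
    also have "\<dots> = 1 - 1 / (real r)^2"
    proof -
      have rne: "real r ^ 2 \<noteq> 0" using rr by simp
      show ?thesis by (simp only: diff_divide_distrib divide_self[OF rne])
    qed
    finally show ?thesis by simp
  qed
  define N where "N = max (80*(r-1)) (nat \<lceil>2 powr (L/\<epsilon>)\<rceil> + 1)"
  show ?thesis
  proof (rule eventually_sequentiallyI[of N])
    fix k assume kN: "N \<le> k"
    have k80: "80*(r-1) \<le> k" using kN unfolding N_def by simp
    have kpow: "2 powr (L/\<epsilon>) \<le> real k"
    proof -
      have "nat \<lceil>2 powr (L/\<epsilon>)\<rceil> + 1 \<le> k" using kN unfolding N_def by simp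
      hence "real (nat \<lceil>2 powr (L/\<epsilon>)\<rceil>) \<le> real k" by simp
      moreover have "2 powr (L/\<epsilon>) \<le> real (nat \<lceil>2 powr (L/\<epsilon>)\<rceil>)" by linarith
      ultimately show ?thesis by linarith
    qed
    have k0: "real k > 0" using kpow by (smt (verit) powr_gt_zero)
    define lam where "lam = log 2 (real k)"
    have lamL: "lam \<ge> L/\<epsilon>" unfolding lam_def using kpow k0 by (simp add: le_log_iff)
    have lam0: "lam \<ge> 0" using lamL L0 e by (smt (verit) divide_pos_pos)
    have klam: "real k = 2 powr lam" unfolding lam_def using k0 by simp
    have Kge: "K_of r k \<ge> 2"
    proof -
      have "10 * (4 * r - 4) = 40 * (r - 1)" by simp
      moreover have "2 \<le> k div (40 * (r-1))"
      proof -
        have "(2 * (40*(r-1))) div (40*(r-1)) \<le> k div (40*(r-1))"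
          using k80 by (intro div_le_mono) simp
        thus ?thesis using r2 by simp
      qed
      ultimately show ?thesis unfolding K_of_def by simp
    qed
    have b1: "b_of r k \<ge> 1"
    proof -
      have "1 \<le> r - 1" using r2 by simp
      hence "AW (K_of r k) (r-1) \<ge> 2" using AW_ge2 Kge by blast
      thus ?thesis unfolding b_of_def by simp
    qed
    define T where "T = (4 * real r - 2) * (2 * real r + 1) / L * log 2 (real k)
      + (2 * real r + 1) * (log 2 (real r) + 1) / L"
    have tT: "t_of r k = nat \<lfloor>T\<rfloor>" unfolding t_of_def T_def L_def by simp
    have logr: "log 2 (real r) \<ge> 0" using rr by simp
    have B5: "(2 * real r + 1) * (log 2 (real r) + 1) / L \<ge> 2"
    proof -
      have "(2 * real r + 1) * (log 2 (real r) + 1) \<ge> 2 * 1"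
        using rr logr by (intro mult_mono) auto
      hence "(2 * real r + 1) * (log 2 (real r) + 1) \<ge> 2 * L" using L1 by linarith
      thus ?thesis using L0 by (simp add: field_simps)
    qed
    have A0: "(4 * real r - 2) * (2 * real r + 1) / L * log 2 (real k) \<ge> 0"
      using rr L0 lam0 unfolding lam_def by (intro mult_nonneg_nonneg divide_nonneg_pos) auto
    have T2: "T \<ge> 2" unfolding T_def using A0 B5 by linarith
    have t2: "t_of r k \<ge> 2" unfolding tT using T2 by linarith
    have tge: "real (t_of r k) \<ge> T - 1" unfolding tT using T2 by linarith
    define n where "n = (t_of r k - 1) div (2*r+1)"
    have nge: "real n \<ge> ((4*real r-2)*lam + log 2 (real r) + 1)/L - 2"
    proof -
      have d: "real (2*r+1) = 2 * real r + 1" by simp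
      have f1: "real n \<ge> real (t_of r k - 1) / real (2*r+1) - 1"
        unfolding n_def by (rule real_div_ge) simp
      hence f2: "real n \<ge> real (t_of r k - 1) / (2 * real r + 1) - 1" unfolding d .
      have te: "real (t_of r k - 1) = real (t_of r k) - 1" using t2 by simp
      have f3: "(T-2)/(2*real r+1) \<le> real (t_of r k - 1)/(2*real r+1)"
      proof (rule divide_right_mono)
        show "T - 2 \<le> real (t_of r k - 1)" using tge te by linarith
      qed (use rr in simp)
      have h: "real n \<ge> (T - 2) / (2 * real r + 1) - 1" using f2 f3 by linarith
      have "T / (2 * real r + 1) = ((4*real r-2)*lam + log 2 (real r) + 1)/L"
      proof -
        have Lne: "L \<noteq> 0" using L0 by simp
        have pne: "2 * real r + 1 \<noteq> 0" using rr by simp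
        have "T = (2 * real r + 1) * (((4*real r-2)*lam + log 2 (real r) + 1)/L)"
          unfolding T_def lam_def using Lne by (simp add: field_simps)
        thus ?thesis using pne by simp
      qed
      moreover have "(T - 2) / (2 * real r + 1) = T / (2 * real r + 1) - 2 / (2 * real r + 1)"
        by (simp add: diff_divide_distrib)
      moreover have "2 / (2 * real r + 1) \<le> 1" using rr by simp
      ultimately show ?thesis using h by linarith
    qed
    define X where "X = real k powr (2 * real r - 1 - \<epsilon>)"
    define Dn where "Dn = (2::real) ^ (r - 1) * (40 * real r) ^ (r\<^sup>2 - 1)"
    have X0: "X \<ge> 0" unfolding X_def by simp
    have D1: "Dn \<ge> 1"
    proof -
      have a1: "1 \<le> (2::real)^(r-1)" by (rule one_le_power) simp
      have a2: "1 \<le> (40 * real r)^(r\<^sup>2-1)" by (rule one_le_power) (use rr in simp)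
      show ?thesis unfolding Dn_def using mult_mono[OF a1 a2] by simp
    qed
    have Mb: "real (M_of r \<epsilon> k) \<le> 2 powr ((2 * real r - 1 - \<epsilon>) * lam)"
    proof -
      have "real (M_of r \<epsilon> k) = real (nat \<lfloor>X / Dn\<rfloor>)" unfolding M_of_def X_def Dn_def by simp
      also have "\<dots> = real_of_int \<lfloor>X / Dn\<rfloor>" using X0 D1 by simp
      also have "\<dots> \<le> X / Dn" by (rule of_int_floor_le)
      also have "\<dots> \<le> X" using X0 D1 by (simp add: divide_le_eq mult_le_cancel_left1)
      also have "X = 2 powr ((2 * real r - 1 - \<epsilon>) * lam)" unfolding X_def klam powr_powr by (simp add: mult.commute)
      finally show ?thesis .
    qed
    have "measure_pmf.prob (row_choice r (b_of r k) (M_of r \<epsilon> k))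
      (bad_event r (b_of r k) (M_of r \<epsilon> k) (t_of r k))
      \<le> real (M_of r \<epsilon> k) * real (M_of r \<epsilon> k) * real r * (1 - 1/(real r)^2)^n"
      unfolding n_def by (rule prob_bound[OF r2 b1 t2])
    also have "\<dots> = real (M_of r \<epsilon> k) * real (M_of r \<epsilon> k) * real r * (2 powr (-L))^n"
      by (simp add: qL)
    also have "\<dots> \<le> 1/2"
      by (rule final_ineq[OF _ e L0 lamL _ Mb nge]) (use rr in auto)
    finally show "measure_pmf.prob (row_choice r (b_of r k) (M_of r \<epsilon> k))
      (bad_event r (b_of r k) (M_of r \<epsilon> k) (t_of r k)) \<le> 1/2" .
  qed
qed

end
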